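(* For all real $D,R\ge2$, \[ \#\mathcal E(D,R)\ll\frac{D^2R(\log R)^2}{\log D}, \] with an absolute implied constant.
   Context: For $\lambda\in\mathbb F_p^*$, $\rho(\lambda,p)=\min\{rs: r,s\text{ positive integers},\ r\equiv\lambda s\pmod p\}$. For real $D,R\ge2$, $\mathcal E(D,R)$ is the set of primes $p$ for which there exists $\lambda\in\mathbb F_p^*$ of multiplicative order $d$ with $3\le d<D$ and $\rho(\lambda,p)<R$. *)

theory Defs
  imports Complex_Main "HOL-Number_Theory.Number_Theory"
begin

text \<open>Elements of F_p^* are represented by their residues lam with 0 < lam < p.\<close>

definition rho :: "nat \<Rightarrow> nat \<Rightarrow> nat" where
  "rho lam p = (LEAST n. \<exists>r s. 0 < r \<and> 0 < s \<and> [r = lam * s] (mod p) \<and> n = r * s)"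

definition calE :: "real \<Rightarrow> real \<Rightarrow> nat set" where
  "calE D R = {p. prime p \<and> (\<exists>lam. 0 < lam \<and> lam < p \<and>
      3 \<le> ord p lam \<and> real (ord p lam) < D \<and> real (rho lam p) < R)}"

end

theory Submission
  imports Defs
begin


lemma harm_bound: "n \<ge> 1 \<Longrightarrow> (\<Sum>r=1..n. 1 / real r) \<le> 1 + ln (real n)"
proof (induction n rule: dec_induct)
  case base then show ?case by simp
next
  case (step n)
  have "ln (real n) - ln (real (Suc n)) \<le> (real n - real (Suc n)) / real (Suc n)"
    using step.hyps by (intro ln_diff_le) auto
  then have "1 / real (Suc n) \<le> ln (real (Suc n)) - ln (real n)"
    by (simp add: field_simps)
  then show ?case using step.IH by simp
qed

lemma prod_primes_dvd:
  fixes N :: nat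
  assumes "finite S" "\<forall>p\<in>S. prime p \<and> p dvd N"
  shows "\<Prod>S dvd N"
  using assms
proof (induction S rule: finite_induct)
  case empty then show ?case by simp
next
  case (insert q A)
  have cop: "coprime q (\<Prod>A)"
  proof -
    have "\<not> q dvd \<Prod>A"
    proof
      assume "q dvd \<Prod>A"
      then obtain x where "x \<in> A" "q dvd x"
        using insert prime_dvd_prod_iff[of A q id] by auto
      moreover have "prime x" "prime q" using insert \<open>x \<in> A\<close> by auto
      ultimately have "q = x" using primes_dvd_imp_eq by blast
      then show False using insert \<open>x \<in> A\<close> by simp
    qed
    then show ?thesis using insert by (simp add: prime_imp_coprime)
  qed
  have "q * \<Prod>A dvd N"
    using insert cop by (intro divides_mult) auto
  then show ?case using insert by simp
qed

lemma big_primes_card: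
  fixes N d :: nat
  assumes "N > 0" "d \<ge> 1"
  shows "finite {p. prime p \<and> d < p \<and> p dvd N}"
    and "d ^ card {p. prime p \<and> d < p \<and> p dvd N} \<le> N"
proof -
  let ?S = "{p. prime p \<and> d < p \<and> p dvd N}"
  have fin: "finite ?S"
    by (rule finite_subset[of _ "{..N}"]) (use assms in \<open>auto dest: dvd_imp_le\<close>)
  then show "finite ?S" .
  have "d ^ card ?S = (\<Prod>p\<in>?S. d)" by simp
  also have "\<dots> \<le> (\<Prod>p\<in>?S. p)"
    by (intro prod_mono) auto
  also have "\<dots> \<le> N"
    using prod_primes_dvd[OF fin] assms by (intro dvd_imp_le) auto
  finally show "d ^ card ?S \<le> N" .
qed

lemma big_primes_card_real:
  fixes N d :: nat and R :: real
  assumes "N > 0" "d \<ge> 3" "real N \<le> R ^ d" "R > 0"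
  shows "real (card {p. prime p \<and> d < p \<and> p dvd N}) \<le> real d * ln R / ln (real d)"
proof -
  let ?k = "card {p. prime p \<and> d < p \<and> p dvd N}"
  have "d ^ ?k \<le> N" using big_primes_card assms by auto
  then have "real d ^ ?k \<le> R ^ d" using assms
    by (metis of_nat_le_iff of_nat_power order_trans)
  then have "ln (real d ^ ?k) \<le> ln (R ^ d)"
    using assms by (subst ln_le_cancel_iff) auto
  then have "real ?k * ln (real d) \<le> real d * ln R"
    using assms by (simp add: ln_realpow)
  moreover have "ln (real d) > 0" using assms by simp
  ultimately show ?thesis by (simp add: field_simps)
qed


lemma card_pairs:
  fixes R :: real
  assumes "R \<ge> 1"
  shows "finite {(r::nat,s::nat). 0 < r \<and> 0 < s \<and> real (r*s) < R}"
    and "real (card {(r::nat,s::nat). 0 < r \<and> 0 < s \<and> real (r*s) < R}) \<le> R * (1 + ln R)"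
proof -
  let ?P = "{(r::nat,s::nat). 0 < r \<and> 0 < s \<and> real (r*s) < R}"
  define n where "n = nat \<lfloor>R\<rfloor>"
  have n1: "n \<ge> 1" using assms unfolding n_def by linarith
  have nR: "real n \<le> R" using assms unfolding n_def by linarith
  let ?Q = "Sigma {1..n} (\<lambda>r. {1..nat \<lfloor>R / real r\<rfloor>})"
  have sub: "?P \<subseteq> ?Q"
  proof
    fix x assume "x \<in> ?P"
    then obtain r s where x: "x = (r,s)" "0 < r" "0 < s" "real (r*s) < R" by auto
    have "real r \<le> real (r*s)" using x by simp
    then have "r \<le> n" using x unfolding n_def by linarith
    moreover have "real s \<le> R / real r" using x by (simp add: field_simps)
    then have "s \<le> nat \<lfloor>R / real r\<rfloor>" using x by linarith
    ultimately show "x \<in> ?Q" using x by auto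
  qed
  have finQ: "finite ?Q" by auto
  then show "finite ?P" using sub finite_subset by blast
  have "card ?P \<le> card ?Q" by (rule card_mono[OF finQ sub])
  also have "card ?Q = (\<Sum>r=1..n. nat \<lfloor>R / real r\<rfloor>)" by simp
  finally have "real (card ?P) \<le> real (\<Sum>r=1..n. nat \<lfloor>R / real r\<rfloor>)"
    by (simp only: of_nat_le_iff)
  also have "\<dots> = (\<Sum>r=1..n. real (nat \<lfloor>R / real r\<rfloor>))"
    by (rule of_nat_sum)
  also have "\<dots> \<le> (\<Sum>r=1..n. R * (1 / real r))"
  proof (intro sum_mono)
    fix r assume "r \<in> {1..n}"
    then have "R / real r \<ge> 0" using assms by simp
    then have "real (nat \<lfloor>R / real r\<rfloor>) = of_int \<lfloor>R / real r\<rfloor>" by simp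
    also have "\<dots> \<le> R / real r" by (rule of_int_floor_le)
    finally show "real (nat \<lfloor>R / real r\<rfloor>) \<le> R * (1 / real r)" by simp
  qed
  also have "\<dots> = R * (\<Sum>r=1..n. 1 / real r)" by (simp add: sum_distrib_left)
  also have "\<dots> \<le> R * (1 + ln (real n))"
    using harm_bound[OF n1] assms by (intro mult_left_mono) auto
  also have "\<dots> \<le> R * (1 + ln R)"
    using nR n1 assms by (intro mult_left_mono) auto
  finally show "real (card ?P) \<le> R * (1 + ln R)" .
qed

lemma sum_d_bound:
  fixes D :: real
  assumes "D \<ge> 2"
  shows "(\<Sum>d\<in>{3..<nat \<lceil>D\<rceil>}. real d / ln (real d)) \<le> D * (D / ln D)"
proof -
  have "(\<Sum>d\<in>{3..<nat \<lceil>D\<rceil>}. real d / ln (real d)) \<le> (\<Sum>d\<in>{3..<nat \<lceil>D\<rceil>}. D / ln D)"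
  proof (intro sum_mono)
    fix d assume d: "d \<in> {3..<nat \<lceil>D\<rceil>}"
    then have "int d < \<lceil>D\<rceil>" by auto
    then have dD: "real d < D" by (metis less_ceiling_iff of_int_of_nat_eq)
    have d3: "real d \<ge> 3" using d by simp
    have "exp 1 \<le> real d" using exp_le d3 by linarith
    then have "ln D / D \<le> ln (real d) / real d" using dD by (intro ln_x_over_x_mono) auto
    moreover have "ln D > 0" "ln (real d) > 0" using d3 dD by auto
    ultimately show "real d / ln (real d) \<le> D / ln D" using d3 dD
      by (simp add: field_simps)
  qed
  also have "\<dots> = real (nat \<lceil>D\<rceil> - 3) * (D / ln D)" by simp
  also have "\<dots> \<le> D * (D / ln D)"
  proof (intro mult_right_mono)
    have "real (nat \<lceil>D\<rceil>) = of_int \<lceil>D\<rceil>" using assms by simp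
    moreover have "of_int \<lceil>D\<rceil> < D + 1" by linarith
    ultimately show "real (nat \<lceil>D\<rceil> - 3) \<le> D" using assms
      by (cases "3 \<le> nat \<lceil>D\<rceil>") (simp_all add: of_nat_diff)
    show "0 \<le> D / ln D" using assms by simp
  qed
  finally show ?thesis .
qed


lemma core:
  fixes p lam r s :: nat
  assumes p: "prime p" and lam: "0 < lam" "lam < p" and d3: "3 \<le> ord p lam"
    and rs: "0 < r" "0 < s" "r < p" "s < p" and c: "[r = lam * s] (mod p)"
  shows "r \<noteq> s" "ord p lam < p"
    "p dvd (max r s ^ ord p lam - min r s ^ ord p lam)"
proof -
  have ndl: "\<not> p dvd lam" using lam by (auto dest: dvd_imp_le)
  have copl: "coprime lam p" using prime_imp_coprime[OF p ndl] by (simp add: coprime_commute)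
  have cops: "coprime s p" using p rs
    by (metis coprime_commute dvd_imp_le not_le prime_imp_coprime)
  show "r \<noteq> s"
  proof
    assume "r = s"
    then have "[1 * s = lam * s] (mod p)" using c by simp
    then have "[1 = lam] (mod p)" using cong_mult_rcancel_nat[OF cops] by blast
    then have "lam = 1" using lam p
      by (metis cong_def mod_less prime_gt_1_nat)
    then show False using d3 by simp
  qed
  have "[lam ^ (p - 1) = 1] (mod p)" using fermat_theorem[OF p ndl] .
  then have "ord p lam dvd p - 1" using ord_divides by blast
  moreover have "p - 1 > 0" using p prime_gt_1_nat by simp
  ultimately have "ord p lam \<le> p - 1" by (rule dvd_imp_le)
  moreover have "1 < p" using p prime_gt_1_nat by blast
  ultimately show "ord p lam < p" by linarith
  let ?d = "ord p lam"
  have "[r ^ ?d = (lam * s) ^ ?d] (mod p)" using c by (rule cong_pow)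
  also have "(lam * s) ^ ?d = lam ^ ?d * s ^ ?d" by (simp add: power_mult_distrib)
  also have "[lam ^ ?d * s ^ ?d = 1 * s ^ ?d] (mod p)"
    using ord_works[of lam p] by (intro cong_mult) auto
  finally have rsd: "[r ^ ?d = s ^ ?d] (mod p)" by simp
  have "[max r s ^ ?d = min r s ^ ?d] (mod p)"
    using rsd cong_sym by (cases "r \<le> s") (auto simp: max_def min_def)
  moreover have "min r s ^ ?d \<le> max r s ^ ?d" by (intro power_mono) auto
  ultimately show "p dvd (max r s ^ ?d - min r s ^ ?d)"
    using cong_altdef_nat by blast
qed


lemma final_arith:
  fixes R L X l0 :: real
  assumes "R \<ge> 0" "L \<ge> l0" "l0 > 0" "X \<ge> 1"
  shows "R + R * (1 + L) * L * X \<le> (1 / l0^2 + 1 / l0 + 1) * (R * L^2 * X)"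
proof -
  have L0: "L > 0" using assms by linarith
  have "1 \<le> L^2 / l0^2" using assms by (simp add: field_simps power_mono)
  also have "\<dots> \<le> L^2 * X / l0^2" using assms by (simp add: field_simps)
  finally have a: "R \<le> R * (L^2 * X / l0^2)" using assms
    by (metis mult.right_neutral mult_left_mono)
  have "L * X \<le> L * X * (L / l0)" using assms L0 by (simp add: field_simps)
  then have b: "R * (L * X) \<le> R * (L^2 * X / l0)" using assms
    by (intro mult_left_mono) (auto simp: power2_eq_square field_simps)
  have "R + R * (1 + L) * L * X = R + R * (L * X) + R * L^2 * X"
    by (simp add: algebra_simps power2_eq_square)
  also have "\<dots> \<le> R * (L^2 * X / l0^2) + R * (L^2 * X / l0) + R * L^2 * X"
    using a b by linarith
  also have "\<dots> = (1 / l0^2 + 1 / l0 + 1) * (R * L^2 * X)"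
    by (simp add: algebra_simps)
  finally show ?thesis .
qed

theorem lemma4p5:
  shows "\<exists>C>0. \<forall>D R :: real. D \<ge> 2 \<longrightarrow> R \<ge> 2 \<longrightarrow>
     finite (calE D R) \<and>
     real (card (calE D R)) \<le> C * (D^2 * R * (ln R)^2 / ln D)"
proof (intro exI[of _ "1 / (ln 2)^2 + 1 / ln 2 + 1"] conjI allI impI)
  have l2: "ln (2::real) > 0" by simp
  show "0 < 1 / (ln 2)^2 + 1 / ln (2::real) + 1"
    by (intro add_pos_pos) (use l2 in auto)
  fix D R :: real
  assume D2: "D \<ge> 2" and R2: "R \<ge> 2"
  define P where "P = {(r::nat,s::nat). 0 < r \<and> 0 < s \<and> real (r*s) < R}"
  define T where "T = {3..<nat \<lceil>D\<rceil>}"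
  define I where "I = {x \<in> T \<times> P. fst (snd x) \<noteq> snd (snd x)}"
  define Nf where "Nf = (\<lambda>d r s. max r s ^ d - min r s ^ d :: nat)"
  define Sf where "Sf = (\<lambda>x. {p. prime p \<and> fst x < p \<and> p dvd Nf (fst x) (fst (snd x)) (snd (snd x))})"
  define n where "n = nat \<lfloor>R\<rfloor>"
  have finP: "finite P" and cardP: "real (card P) \<le> R * (1 + ln R)"
    using card_pairs[of R] R2 unfolding P_def by auto
  have finI: "finite I" unfolding I_def T_def using finP by auto
  have Npos: "Nf d r s > 0" if "d \<ge> 1" "r \<noteq> s" for d r s
  proof -
    have "min r s < max r s" using that by auto
    then have "min r s ^ d < max r s ^ d" using that by (intro power_strict_mono) auto
    then show ?thesis unfolding Nf_def by simp
  qed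
  have Nle: "real (Nf d r s) \<le> R ^ d" if "(r,s) \<in> P" for d r s
  proof -
    have "max r s \<le> r * s" using that unfolding P_def by (auto simp: max_def)
    then have "real (max r s) \<le> R" using that unfolding P_def
      by (metis (mono_tags, lifting) case_prodD less_le_not_le mem_Collect_eq nle_le of_nat_le_iff order_trans)
    then have "real (max r s) ^ d \<le> R ^ d" by (intro power_mono) auto
    moreover have "Nf d r s \<le> max r s ^ d" unfolding Nf_def by simp
    ultimately show ?thesis by (metis of_nat_le_iff of_nat_power order_trans)
  qed
  have sub: "calE D R \<subseteq> {1..n} \<union> (\<Union>x\<in>I. Sf x)"
  proof
    fix p assume "p \<in> calE D R"
    then obtain lam where p: "prime p" and lam: "0 < lam" "lam < p"
      and d3: "3 \<le> ord p lam" and dD: "real (ord p lam) < D" and rh: "real (rho lam p) < R"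
      unfolding calE_def by blast
    show "p \<in> {1..n} \<union> (\<Union>x\<in>I. Sf x)"
    proof (cases "real p \<le> R")
      case True
      then have "p \<le> n" unfolding n_def by linarith
      moreover have "1 < p" using prime_gt_1_nat[OF p] .
      ultimately have "p \<in> {1..n}" by simp
      then show ?thesis by (rule UnI1)
    next
      case False
      let ?Q = "\<lambda>m. \<exists>r s. 0 < r \<and> 0 < s \<and> [r = lam * s] (mod p) \<and> m = r * s"
      have "?Q (lam * 1)" using lam by auto
      then have "?Q (LEAST m. ?Q m)" by (rule LeastI)
      then obtain r s where rs: "0 < r" "0 < s" "[r = lam * s] (mod p)" "rho lam p = r * s"
        unfolding rho_def by blast
      have rsR: "real (r * s) < R" using rh rs by simp
      have "r \<le> r * s" "s \<le> r * s" using rs(1,2) by simp_all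
      then have "real r < R" "real s < R" using rsR
        by (metis le_less_trans of_nat_le_iff)+
      then have rp: "r < p" "s < p" using False by linarith+
      note cc = core[OF p lam d3 rs(1,2) rp rs(3)]
      have "int (ord p lam) < \<lceil>D\<rceil>" using dD by (metis less_ceiling_iff of_int_of_nat_eq)
      then have "ord p lam < nat \<lceil>D\<rceil>" by simp
      then have dT: "ord p lam \<in> T" unfolding T_def using d3 by simp
      have rsP: "(r,s) \<in> P" unfolding P_def using rs(1,2) rsR by simp
      have "(ord p lam, r, s) \<in> I" unfolding I_def using cc(1) dT rsP by simp
      moreover have "p \<in> Sf (ord p lam, r, s)" unfolding Sf_def Nf_def using cc(2,3) p by simp
      ultimately show ?thesis by blast
    qed
  qed
  have finS: "finite (Sf x)" if "x \<in> I" for x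
  proof -
    obtain d r s where x: "x = (d,r,s)" by (cases x) auto
    have "d \<ge> 3" "r \<noteq> s" using that x unfolding I_def T_def by auto
    then have "Nf d r s > 0" using Npos[of d r s] by simp
    then have "finite {p. prime p \<and> d < p \<and> p dvd Nf d r s}"
      using \<open>d \<ge> 3\<close> by (intro big_primes_card(1)) simp_all
    then show ?thesis unfolding Sf_def x by simp
  qed
  have finU: "finite (\<Union>x\<in>I. Sf x)" using finI finS by auto
  show "finite (calE D R)" using sub finU by (meson finite_Un finite_atLeastAtMost finite_subset)
  define h where "h = (\<lambda>d::nat. real d * ln R / ln (real d))"
  have h0: "h d \<ge> 0" if "d \<in> T" for d using that R2 unfolding h_def T_def by auto
  have cS: "real (card (Sf x)) \<le> h (fst x)" if "x \<in> I" for x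
  proof -
    obtain d r s where x: "x = (d,r,s)" by (cases x) auto
    have "d \<ge> 3" "r \<noteq> s" "(r,s) \<in> P" using that x unfolding I_def T_def by auto
    then show ?thesis unfolding Sf_def x h_def
      using big_primes_card_real[of "Nf d r s" d R] Npos Nle R2 by auto
  qed
  have "card (calE D R) \<le> card ({1..n} \<union> (\<Union>x\<in>I. Sf x))"
    using sub finU by (intro card_mono) auto
  also have "\<dots> \<le> card {1..n} + card (\<Union>x\<in>I. Sf x)" by (rule card_Un_le)
  also have "\<dots> \<le> n + (\<Sum>x\<in>I. card (Sf x))" using card_UN_le[OF finI] by simp
  finally have cardE: "real (card (calE D R)) \<le> real n + (\<Sum>x\<in>I. real (card (Sf x)))"
    by (metis of_nat_add of_nat_le_iff of_nat_sum)
  have "(\<Sum>x\<in>I. real (card (Sf x))) \<le> (\<Sum>x\<in>I. h (fst x))"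
    using cS by (intro sum_mono) auto
  also have "\<dots> \<le> (\<Sum>x\<in>T \<times> P. h (fst x))"
    using finP h0 unfolding I_def T_def by (intro sum_mono2) auto
  also have "\<dots> = (\<Sum>(d,y)\<in>T \<times> P. h d)" by (intro sum.cong) auto
  also have "\<dots> = (\<Sum>d\<in>T. \<Sum>y\<in>P. h d)" by (rule sum.cartesian_product[symmetric])
  also have "\<dots> = real (card P) * (\<Sum>d\<in>T. h d)"
    by (simp add: sum_distrib_left)
  finally have s1: "(\<Sum>x\<in>I. real (card (Sf x))) \<le> real (card P) * (\<Sum>d\<in>T. h d)" .
  have "(\<Sum>d\<in>T. h d) = ln R * (\<Sum>d\<in>T. real d / ln (real d))"
    unfolding h_def sum_distrib_left by (intro sum.cong) auto
  also have "\<dots> \<le> ln R * (D * (D / ln D))"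
    using sum_d_bound[OF D2] R2 unfolding T_def by (intro mult_left_mono) auto
  finally have s2: "(\<Sum>d\<in>T. h d) \<le> ln R * (D * (D / ln D))" .
  have sumb: "(\<Sum>x\<in>I. real (card (Sf x))) \<le> real (card P) * (ln R * (D * (D / ln D)))"
    using s1 mult_left_mono[OF s2, of "real (card P)"] by simp
  have main: "real (card (calE D R)) \<le> real n + real (card P) * (ln R * (D * (D / ln D)))"
    using cardE sumb by linarith
  have nR: "real n \<le> R" unfolding n_def using R2 by linarith
  have X0: "D * (D / ln D) \<ge> 1"
  proof -
    have "ln D \<le> D - 1" using D2 by (intro ln_le_minus_one) auto
    moreover have "ln D > 0" using D2 by simp
    ultimately have "1 \<le> D / ln D" by (simp add: field_simps)
    then have "1 * 1 \<le> D * (D / ln D)" using D2 by (intro mult_mono) auto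
    then show ?thesis by simp
  qed
  have LR: "ln R \<ge> ln 2" using R2 by simp
  have "real (card P) * (ln R * (D * (D / ln D))) \<le> R * (1 + ln R) * (ln R * (D * (D / ln D)))"
  proof (rule mult_right_mono[OF cardP])
    have "ln R \<ge> 0" using R2 by simp
    moreover have "D * (D / ln D) \<ge> 0" using X0 by linarith
    ultimately show "0 \<le> ln R * (D * (D / ln D))" by (rule mult_nonneg_nonneg)
  qed
  with main nR have "real (card (calE D R)) \<le> R + R * (1 + ln R) * ln R * (D * (D / ln D))"
    by (simp add: mult.assoc)
  also have "\<dots> \<le> (1 / (ln 2)^2 + 1 / ln 2 + 1) * (R * (ln R)^2 * (D * (D / ln D)))"
    using R2 LR X0 by (intro final_arith) auto
  also have "R * (ln R)^2 * (D * (D / ln D)) = D^2 * R * (ln R)^2 / ln D"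
    by (simp add: power2_eq_square)
  finally show "real (card (calE D R)) \<le> (1 / (ln 2)^2 + 1 / ln 2 + 1) * (D^2 * R * (ln R)^2 / ln D)" .
qed

end
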